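(* Let $G$ be a finitely generated nilpotent group and $\Phi$ a uniformly continuous action of $G$ on a metric space $\Omega$; let $U,V\subset\Omega$. Assume there exists $g\in G$ such that the homeomorphism $f_g=\Phi(g,\cdot)$ is topologically Anosov with respect to $(U,V)$. Then the action $\Phi$ is topologically Anosov with respect to $(U,V)$.
   Context: Let $(\Omega,\mathrm{dist})$ be a metric space; $B(\delta,x)=\{y:\mathrm{dist}(x,y)<\delta\}$ and $B(\delta,U)=\bigcup_{x\in U}B(\delta,x)$. An action of a group $G$ is a map $\Phi:G\times\Omega\to\Omega$ such that each $f_g=\Phi(g,\cdot)$ is a homeomorphism of $\Omega$, $\Phi(e,x)=x$, and $\Phi(g_1g_2,x)=\Phi(g_1,\Phi(g_2,x))$. For a finitely generated $G$, the action is uniformly continuous if for some finite symmetric generating set $S$ (symmetric: $s\in S\Rightarrow s^{-1}\in S$) all maps $f_s$, $s\in S$, are uniformly continuous. Fix a finite symmetric generating set $S$ of $G$. For $d>0$, a family $\{y_g\}_{g\in G}\subset\Omega$ is a $d$-pseudotrajectory if $\mathrm{dist}(y_{sg},f_s(y_g))<d$ for all $s\in S$, $g\in G$. A uniformly continuous action has the shadowing property on $V\subset\Omega$ if for every $\varepsilon>0$ there is $d>0$ such that for every $d$-pseudotrajectory $\{y_g\}$ with all $y_g\in V$ there is $x_e\in\Omega$ with $\mathrm{dist}(y_g,f_g(x_e))<\varepsilon$ for all $g\in G$ (this property does not depend on the choice of $S$). The action is expansive on $U\subset\Omega$ if there is $\Delta>0$ such that whenever $x_1,x_2\in U$ satisfy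 $\Phi(g,x_1),\Phi(g,x_2)\in U$ and $\mathrm{dist}(\Phi(g,x_1),\Phi(g,x_2))<\Delta$ for all $g\in G$, then $x_1=x_2$. The action is topologically Anosov with respect to $(U,V)$ if (TA1) there is $\gamma>0$ with $B(\gamma,V)\subset U$, (TA2) it has the shadowing property on $V$, and (TA3) it is expansive on $U$. A homeomorphism $f$ of $\Omega$ is said to have any of these properties if the $\mathbb Z$-action $(k,x)\mapsto f^k(x)$ (with generating set $\{1,-1\}$) has it. A group $G$ is nilpotent of class $n$ if its lower central series $G_1=G$, $G_{i+1}=[G_i,G]$ satisfies $G_{n+1}=\{e\}$ and $G_n\neq\{e\}$; here $[g,h]=ghg^{-1}h^{-1}$. *)

theory Defs
  imports "HOL-Analysis.Analysis" "HOL-Algebra.Algebra"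
begin

definition commutator :: "('a, 'm) monoid_scheme \<Rightarrow> 'a \<Rightarrow> 'a \<Rightarrow> 'a" where
  "commutator G g h = g \<otimes>\<^bsub>G\<^esub> h \<otimes>\<^bsub>G\<^esub> inv\<^bsub>G\<^esub> g \<otimes>\<^bsub>G\<^esub> inv\<^bsub>G\<^esub> h"

text \<open>Lower central series, indexed from 0: lower_central G 0 = G = G_1 of the paper,
  lower_central G i = G_(i+1), with G_(i+1) = [G_i, G] generated by commutators.\<close>
fun lower_central :: "('a, 'm) monoid_scheme \<Rightarrow> nat \<Rightarrow> 'a set" where
  "lower_central G 0 = carrier G"
| "lower_central G (Suc i) =
     generate G {commutator G h g | h g. h \<in> lower_central G i \<and> g \<in> carrier G}"

definition nilpotent_group :: "('a, 'm) monoid_scheme \<Rightarrow> bool" where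
  "nilpotent_group G \<longleftrightarrow> group G \<and> (\<exists>n. lower_central G n = {\<one>\<^bsub>G\<^esub>})"

definition symmetric_gen_set :: "('a, 'm) monoid_scheme \<Rightarrow> 'a set \<Rightarrow> bool" where
  "symmetric_gen_set G S \<longleftrightarrow> finite S \<and> S \<subseteq> carrier G \<and>
     (\<forall>s\<in>S. inv\<^bsub>G\<^esub> s \<in> S) \<and> generate G S = carrier G"

definition finitely_generated :: "('a, 'm) monoid_scheme \<Rightarrow> bool" where
  "finitely_generated G \<longleftrightarrow> (\<exists>S. finite S \<and> S \<subseteq> carrier G \<and> generate G S = carrier G)"

definition group_action_homeo ::
    "('a, 'm) monoid_scheme \<Rightarrow> ('a \<Rightarrow> 'b::metric_space \<Rightarrow> 'b) \<Rightarrow> bool" where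
  "group_action_homeo G \<Phi> \<longleftrightarrow>
     (\<forall>g\<in>carrier G. \<exists>h. homeomorphism UNIV UNIV (\<Phi> g) h) \<and>
     (\<forall>x. \<Phi> \<one>\<^bsub>G\<^esub> x = x) \<and>
     (\<forall>g1\<in>carrier G. \<forall>g2\<in>carrier G. \<forall>x. \<Phi> (g1 \<otimes>\<^bsub>G\<^esub> g2) x = \<Phi> g1 (\<Phi> g2 x))"

definition unif_cont_action ::
    "('a, 'm) monoid_scheme \<Rightarrow> ('a \<Rightarrow> 'b::metric_space \<Rightarrow> 'b) \<Rightarrow> bool" where
  "unif_cont_action G \<Phi> \<longleftrightarrow> group_action_homeo G \<Phi> \<and>
     (\<exists>S. symmetric_gen_set G S \<and> (\<forall>s\<in>S. uniformly_continuous_on UNIV (\<Phi> s)))"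

definition pseudotrajectory ::
    "('a, 'm) monoid_scheme \<Rightarrow> ('a \<Rightarrow> 'b::metric_space \<Rightarrow> 'b) \<Rightarrow> 'a set \<Rightarrow> real \<Rightarrow> ('a \<Rightarrow> 'b) \<Rightarrow> bool" where
  "pseudotrajectory G \<Phi> S d y \<longleftrightarrow>
     (\<forall>s\<in>S. \<forall>g\<in>carrier G. dist (y (s \<otimes>\<^bsub>G\<^esub> g)) (\<Phi> s (y g)) < d)"

definition shadowing_on ::
    "('a, 'm) monoid_scheme \<Rightarrow> ('a \<Rightarrow> 'b::metric_space \<Rightarrow> 'b) \<Rightarrow> 'a set \<Rightarrow> 'b set \<Rightarrow> bool" where
  "shadowing_on G \<Phi> S V \<longleftrightarrow>
     (\<forall>\<epsilon>>0. \<exists>d>0. \<forall>y. pseudotrajectory G \<Phi> S d y \<and> (\<forall>g\<in>carrier G. y g \<in> V) \<longrightarrow>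
        (\<exists>x. \<forall>g\<in>carrier G. dist (y g) (\<Phi> g x) < \<epsilon>))"

definition expansive_on ::
    "('a, 'm) monoid_scheme \<Rightarrow> ('a \<Rightarrow> 'b::metric_space \<Rightarrow> 'b) \<Rightarrow> 'b set \<Rightarrow> bool" where
  "expansive_on G \<Phi> U \<longleftrightarrow>
     (\<exists>\<Delta>>0. \<forall>x1\<in>U. \<forall>x2\<in>U.
        (\<forall>g\<in>carrier G. \<Phi> g x1 \<in> U \<and> \<Phi> g x2 \<in> U \<and> dist (\<Phi> g x1) (\<Phi> g x2) < \<Delta>)
        \<longrightarrow> x1 = x2)"

definition top_anosov ::
    "('a, 'm) monoid_scheme \<Rightarrow> ('a \<Rightarrow> 'b::metric_space \<Rightarrow> 'b) \<Rightarrow> 'a set \<Rightarrow> 'b set \<Rightarrow> 'b set \<Rightarrow> bool" where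
  "top_anosov G \<Phi> S U V \<longleftrightarrow>
     (\<exists>\<gamma>>0. (\<Union>x\<in>V. ball x \<gamma>) \<subseteq> U) \<and> shadowing_on G \<Phi> S V \<and> expansive_on G \<Phi> U"

definition int_iter :: "('b \<Rightarrow> 'b) \<Rightarrow> int \<Rightarrow> 'b \<Rightarrow> 'b" where
  "int_iter f k = (if 0 \<le> k then f ^^ nat k else (Hilbert_Choice.inv f) ^^ nat (- k))"

definition top_anosov_homeo :: "('b::metric_space \<Rightarrow> 'b) \<Rightarrow> 'b set \<Rightarrow> 'b set \<Rightarrow> bool" where
  "top_anosov_homeo f U V \<longleftrightarrow> top_anosov integer_group (int_iter f) {1, -1} U V"

end

theory Submission
  imports Defs
begin

lemma act_one: "group_action_homeo G \<Phi> \<Longrightarrow> \<Phi> \<one>\<^bsub>G\<^esub> x = x"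
  unfolding group_action_homeo_def by (elim conjE) (erule allE)

lemma act_mult: "group_action_homeo G \<Phi> \<Longrightarrow> a \<in> carrier G \<Longrightarrow> b \<in> carrier G \<Longrightarrow>
   \<Phi> (a \<otimes>\<^bsub>G\<^esub> b) x = \<Phi> a (\<Phi> b x)"
  unfolding group_action_homeo_def by (elim conjE) (drule bspec, assumption, drule bspec, assumption, erule allE)

lemma act_inv1: "group G \<Longrightarrow> group_action_homeo G \<Phi> \<Longrightarrow> a \<in> carrier G \<Longrightarrow>
   \<Phi> (inv\<^bsub>G\<^esub> a) (\<Phi> a x) = x"
proof -
  assume G: "group G" "group_action_homeo G \<Phi>" "a \<in> carrier G"
  have "\<Phi> (inv\<^bsub>G\<^esub> a) (\<Phi> a x) = \<Phi> (inv\<^bsub>G\<^esub> a \<otimes>\<^bsub>G\<^esub> a) x"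
    using G by (simp add: act_mult group.inv_closed)
  also have "\<dots> = x" using G by (simp add: group.l_inv act_one)
  finally show ?thesis .
qed

lemma act_inv2: "group G \<Longrightarrow> group_action_homeo G \<Phi> \<Longrightarrow> a \<in> carrier G \<Longrightarrow>
   \<Phi> a (\<Phi> (inv\<^bsub>G\<^esub> a) x) = x"
proof -
  assume G: "group G" "group_action_homeo G \<Phi>" "a \<in> carrier G"
  have "\<Phi> a (\<Phi> (inv\<^bsub>G\<^esub> a) x) = \<Phi> (a \<otimes>\<^bsub>G\<^esub> inv\<^bsub>G\<^esub> a) x"
    using G by (simp add: act_mult group.inv_closed)
  also have "\<dots> = x" using G by (simp add: group.r_inv act_one)
  finally show ?thesis .
qed

lemma act_nat_pow: "group G \<Longrightarrow> group_action_homeo G \<Phi> \<Longrightarrow> a \<in> carrier G \<Longrightarrow>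
   (\<Phi> a) ^^ n = \<Phi> (a [^]\<^bsub>G\<^esub> n)"
proof (induction n)
  case 0
  then show ?case by (auto simp: act_one)
next
  case (Suc n)
  have "(\<Phi> a ^^ Suc n) x = \<Phi> (a [^]\<^bsub>G\<^esub> Suc n) x" for x
  proof -
    have "(\<Phi> a ^^ Suc n) x = \<Phi> a (\<Phi> (a [^]\<^bsub>G\<^esub> n) x)" using Suc by simp
    also have "\<dots> = \<Phi> (a \<otimes>\<^bsub>G\<^esub> a [^]\<^bsub>G\<^esub> n) x"
      using Suc by (simp add: act_mult group.is_monoid monoid.nat_pow_closed)
    also have "\<dots> = \<Phi> (a [^]\<^bsub>G\<^esub> Suc n) x"
      using Suc.prems monoid.nat_pow_Suc2[OF group.is_monoid, of G a n] by metis
    finally show ?thesis .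
  qed
  then show ?case by blast
qed

lemma act_inv_fun: "group G \<Longrightarrow> group_action_homeo G \<Phi> \<Longrightarrow> a \<in> carrier G \<Longrightarrow>
   Hilbert_Choice.inv (\<Phi> a) = \<Phi> (inv\<^bsub>G\<^esub> a)"
  by (rule inv_unique_comp) (auto simp: fun_eq_iff act_inv1 act_inv2)

lemma int_iter_act: 
  assumes G: "group G" "group_action_homeo G \<Phi>" "a \<in> carrier G"
  shows "int_iter (\<Phi> a) k = \<Phi> (a [^]\<^bsub>G\<^esub> k)"
proof (cases "0 \<le> k")
  case True
  have "int_iter (\<Phi> a) k = (\<Phi> a) ^^ nat k" using True by (simp add: int_iter_def)
  also have "\<dots> = \<Phi> (a [^]\<^bsub>G\<^esub> nat k)" by (rule act_nat_pow[OF G])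
  also have "a [^]\<^bsub>G\<^esub> nat k = a [^]\<^bsub>G\<^esub> k" by (rule pow_nat[OF True])
  finally show ?thesis .
next
  case False
  have "int_iter (\<Phi> a) k = (Hilbert_Choice.inv (\<Phi> a)) ^^ nat (- k)"
    using False by (simp add: int_iter_def)
  also have "Hilbert_Choice.inv (\<Phi> a) = \<Phi> (inv\<^bsub>G\<^esub> a)" by (rule act_inv_fun[OF G])
  also have "\<Phi> (inv\<^bsub>G\<^esub> a) ^^ nat (- k) = \<Phi> ((inv\<^bsub>G\<^esub> a) [^]\<^bsub>G\<^esub> nat (- k))"
    by (rule act_nat_pow[OF G(1,2) group.inv_closed[OF G(1,3)]])
  also have "(inv\<^bsub>G\<^esub> a) [^]\<^bsub>G\<^esub> nat (- k) = inv\<^bsub>G\<^esub> (a [^]\<^bsub>G\<^esub> nat (- k))"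
    by (rule group.nat_pow_inv[OF G(1,3)])
  also have "inv\<^bsub>G\<^esub> (a [^]\<^bsub>G\<^esub> nat (- k)) = a [^]\<^bsub>G\<^esub> k"
    using False by (simp add: int_pow_def2[of G a k])
  finally show ?thesis .
qed

definition UC :: "('b::metric_space \<Rightarrow> 'b) \<Rightarrow> bool" where
  "UC f \<longleftrightarrow> (\<forall>e>0. \<exists>d>0. \<forall>x x'. dist x' x < d \<longrightarrow> dist (f x') (f x) < e)"

lemma UC_comp: "UC f \<Longrightarrow> UC g \<Longrightarrow> UC (\<lambda>x. f (g x))"
  unfolding UC_def by meson

lemma unif_all:
  assumes G: "group G" and A: "group_action_homeo G \<Phi>"
    and S: "symmetric_gen_set G S'" and U: "\<forall>s\<in>S'. uniformly_continuous_on UNIV (\<Phi> s)"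
    and a: "a \<in> carrier G"
  shows "UC (\<Phi> a)"
proof -
  have U': "UC (\<Phi> s)" if "s \<in> S'" for s
    using U that unfolding UC_def uniformly_continuous_on_def by blast
  have "a \<in> generate G S'" using S a by (simp add: symmetric_gen_set_def)
  then show ?thesis
  proof (induction rule: generate.induct)
    case one
    then show ?case using A by (auto simp: act_one UC_def)
  next
    case (incl h)
    then show ?case using U' by blast
  next
    case (inv h)
    then show ?case using U' S by (simp add: symmetric_gen_set_def)
  next
    case (eng h1 h2)
    have c: "h1 \<in> carrier G" "h2 \<in> carrier G"
      using eng S G by (auto simp: symmetric_gen_set_def group.generate_in_carrier)
    have "\<Phi> (h1 \<otimes>\<^bsub>G\<^esub> h2) = (\<lambda>x. \<Phi> h1 (\<Phi> h2 x))"
      using c A by (auto simp: act_mult)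
    then show ?case using eng UC_comp by metis
  qed
qed


lemma pseudo_mono: "pseudotrajectory G \<Phi> S d y \<Longrightarrow> d \<le> d' \<Longrightarrow> pseudotrajectory G \<Phi> S d' y"
  unfolding pseudotrajectory_def by (meson less_le_trans)

lemma word_est:
  assumes G: "group G" and A: "group_action_homeo G \<Phi>" and S: "symmetric_gen_set G S"
    and UCall: "\<forall>a\<in>carrier G. UC (\<Phi> a)" and a: "a \<in> carrier G"
  shows "\<forall>\<eta>>0. \<exists>\<delta>>0. \<forall>y. pseudotrajectory G \<Phi> S \<delta> y \<longrightarrow>
           (\<forall>h\<in>carrier G. dist (y (a \<otimes>\<^bsub>G\<^esub> h)) (\<Phi> a (y h)) < \<eta>)"
proof -
  interpret group G by fact
  have Sc: "S \<subseteq> carrier G" and Si: "\<forall>s\<in>S. inv\<^bsub>G\<^esub> s \<in> S"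
    using S by (auto simp: symmetric_gen_set_def)
  have "a \<in> generate G S" using S a by (simp add: symmetric_gen_set_def)
  then show ?thesis
  proof (induction rule: generate.induct)
    case one
    show ?case
    proof (intro allI impI)
      fix \<eta> :: real assume "\<eta> > 0"
      then show "\<exists>\<delta>>0. \<forall>y. pseudotrajectory G \<Phi> S \<delta> y \<longrightarrow>
           (\<forall>h\<in>carrier G. dist (y (\<one>\<^bsub>G\<^esub> \<otimes>\<^bsub>G\<^esub> h)) (\<Phi> \<one>\<^bsub>G\<^esub> (y h)) < \<eta>)"
        using A by (auto simp: act_one intro!: exI[of _ 1])
    qed
  next
    case (incl s)
    then show ?case unfolding pseudotrajectory_def by blast
  next
    case (inv s)
    then have "inv\<^bsub>G\<^esub> s \<in> S" using Si by blast
    then show ?case unfolding pseudotrajectory_def by blast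
  next
    case (eng h1 h2)
    have c: "h1 \<in> carrier G" "h2 \<in> carrier G"
      using eng Sc by (auto simp: generate_in_carrier)
    show ?case
    proof (intro allI impI)
      fix \<eta> :: real assume eta: "\<eta> > 0"
      obtain \<delta>1 where d1: "\<delta>1 > 0" "\<forall>y. pseudotrajectory G \<Phi> S \<delta>1 y \<longrightarrow>
           (\<forall>h\<in>carrier G. dist (y (h1 \<otimes>\<^bsub>G\<^esub> h)) (\<Phi> h1 (y h)) < \<eta>/2)"
        using eng.IH(1) eta by (meson half_gt_zero)
      obtain \<rho> where r: "\<rho> > 0" "\<forall>x x'. dist x' x < \<rho> \<longrightarrow> dist (\<Phi> h1 x') (\<Phi> h1 x) < \<eta>/2"
        using UCall c eta unfolding UC_def by (meson half_gt_zero)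
      obtain \<delta>2 where d2: "\<delta>2 > 0" "\<forall>y. pseudotrajectory G \<Phi> S \<delta>2 y \<longrightarrow>
           (\<forall>h\<in>carrier G. dist (y (h2 \<otimes>\<^bsub>G\<^esub> h)) (\<Phi> h2 (y h)) < \<rho>)"
        using eng.IH(2) r by blast
      show "\<exists>\<delta>>0. \<forall>y. pseudotrajectory G \<Phi> S \<delta> y \<longrightarrow>
           (\<forall>h\<in>carrier G. dist (y (h1 \<otimes>\<^bsub>G\<^esub> h2 \<otimes>\<^bsub>G\<^esub> h)) (\<Phi> (h1 \<otimes>\<^bsub>G\<^esub> h2) (y h)) < \<eta>)"
      proof (intro exI[of _ "min \<delta>1 \<delta>2"] conjI allI impI ballI)
        show "min \<delta>1 \<delta>2 > 0" using d1 d2 by simp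
        fix y h assume py: "pseudotrajectory G \<Phi> S (min \<delta>1 \<delta>2) y" and h: "h \<in> carrier G"
        have p1: "pseudotrajectory G \<Phi> S \<delta>1 y" and p2: "pseudotrajectory G \<Phi> S \<delta>2 y"
          using py pseudo_mono by fastforce+
        have e1: "dist (y (h1 \<otimes>\<^bsub>G\<^esub> (h2 \<otimes>\<^bsub>G\<^esub> h))) (\<Phi> h1 (y (h2 \<otimes>\<^bsub>G\<^esub> h))) < \<eta>/2"
          using d1(2) p1 h c by blast
        have "dist (y (h2 \<otimes>\<^bsub>G\<^esub> h)) (\<Phi> h2 (y h)) < \<rho>" using d2(2) p2 h by blast
        then have e2: "dist (\<Phi> h1 (y (h2 \<otimes>\<^bsub>G\<^esub> h))) (\<Phi> h1 (\<Phi> h2 (y h))) < \<eta>/2"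
          using r(2) by blast
        have "dist (y (h1 \<otimes>\<^bsub>G\<^esub> (h2 \<otimes>\<^bsub>G\<^esub> h))) (\<Phi> h1 (\<Phi> h2 (y h))) < \<eta>"
          using dist_triangle[of "y (h1 \<otimes>\<^bsub>G\<^esub> (h2 \<otimes>\<^bsub>G\<^esub> h))" "\<Phi> h1 (\<Phi> h2 (y h))" "\<Phi> h1 (y (h2 \<otimes>\<^bsub>G\<^esub> h))"] e1 e2 by linarith
        then show "dist (y (h1 \<otimes>\<^bsub>G\<^esub> h2 \<otimes>\<^bsub>G\<^esub> h)) (\<Phi> (h1 \<otimes>\<^bsub>G\<^esub> h2) (y h)) < \<eta>"
          using c h A by (simp add: m_assoc act_mult)
      qed
    qed
  qed
qed

lemma finite_delta:
  fixes P :: "'x \<Rightarrow> real \<Rightarrow> bool"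
  assumes "finite F" and "\<And>a. a \<in> F \<Longrightarrow> \<exists>\<delta>>0. P a \<delta>"
    and "\<And>a \<delta> \<delta>'. P a \<delta> \<Longrightarrow> 0 < \<delta>' \<Longrightarrow> \<delta>' \<le> \<delta> \<Longrightarrow> P a \<delta>'"
  shows "\<exists>\<delta>>0. \<forall>a\<in>F. P a \<delta>"
  using assms(1,2)
proof (induction F rule: finite_induct)
  case empty
  then show ?case by (auto intro: exI[of _ 1])
next
  case (insert x F)
  obtain d1 where d1: "d1 > 0" "\<forall>a\<in>F. P a d1" using insert by blast
  obtain d2 where d2: "d2 > 0" "P x d2" using insert by blast
  show ?case
    by (rule exI[of _ "min d1 d2"]) (use d1 d2 assms(3) in auto)
qed

lemma lc_subgroup: "group G \<Longrightarrow> subgroup (lower_central G i) G"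
proof (induction i)
  case 0
  then show ?case by (simp add: group.subgroup_self)
next
  case (Suc i)
  interpret group G by fact
  have "{commutator G h g |h g. h \<in> lower_central G i \<and> g \<in> carrier G} \<subseteq> carrier G"
    using Suc subgroup.subset by (fastforce simp: commutator_def)
  then show ?case by (simp add: generate_is_subgroup)
qed

lemma lc_comm: "group G \<Longrightarrow> a \<in> lower_central G i \<Longrightarrow> g \<in> carrier G \<Longrightarrow>
   commutator G (inv\<^bsub>G\<^esub> a) g \<in> lower_central G (Suc i)"
  using lc_subgroup[of G i] subgroup.m_inv_closed by (fastforce intro: generate.incl)

context group
begin

lemma cancel1: "x \<in> carrier G \<Longrightarrow> y \<in> carrier G \<Longrightarrow> x \<otimes> (inv x \<otimes> y) = y"
  by (simp add: m_assoc[symmetric])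

lemma cancel2: "x \<in> carrier G \<Longrightarrow> y \<in> carrier G \<Longrightarrow> inv x \<otimes> (x \<otimes> y) = y"
  by (simp add: m_assoc[symmetric])

lemma conj_pow:
  assumes a: "a \<in> carrier G" and g: "g \<in> carrier G"
  shows "(inv a \<otimes> g \<otimes> a) [^] (k::int) = inv a \<otimes> g [^] k \<otimes> a"
proof -
  have hom: "(\<lambda>x. inv a \<otimes> x \<otimes> a) \<in> hom G G"
    unfolding hom_def using a by (auto simp: m_assoc cancel1)
  show ?thesis using hom_int_pow[OF hom g is_group is_group] by simp
qed

lemma conj_move: "a \<in> carrier G \<Longrightarrow> x \<in> carrier G \<Longrightarrow> a \<otimes> (inv a \<otimes> x \<otimes> a) = x \<otimes> a"
  by (simp add: m_assoc[symmetric])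

lemma comm_t: "a \<in> carrier G \<Longrightarrow> g \<in> carrier G \<Longrightarrow>
   commutator G (inv a) g \<otimes> g = inv a \<otimes> g \<otimes> a"
  by (simp add: commutator_def m_assoc)

end


theorem lemma2:
  fixes G :: "('a, 'm) monoid_scheme"
    and \<Phi> :: "'a \<Rightarrow> 'b::metric_space \<Rightarrow> 'b"
    and S :: "'a set" and U V :: "'b set"
  assumes "nilpotent_group G"
    and "finitely_generated G"
    and "unif_cont_action G \<Phi>"
    and "symmetric_gen_set G S"
    and "\<exists>g\<in>carrier G. top_anosov_homeo (\<Phi> g) U V"
  shows "top_anosov G \<Phi> S U V"
proof -
  have grp: "group G" and "\<exists>n. lower_central G n = {\<one>\<^bsub>G\<^esub>}"
    using assms(1) by (auto simp: nilpotent_group_def)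
  then obtain n where n: "lower_central G n = {\<one>\<^bsub>G\<^esub>}" by blast
  interpret group G by (fact grp)
  have A: "group_action_homeo G \<Phi>" using assms(3) by (simp add: unif_cont_action_def)
  obtain S' where S': "symmetric_gen_set G S'" "\<forall>s\<in>S'. uniformly_continuous_on UNIV (\<Phi> s)"
    using assms(3) by (auto simp: unif_cont_action_def)
  have UCall: "\<forall>a\<in>carrier G. UC (\<Phi> a)" using unif_all[OF grp A S'] by blast
  have SS: "symmetric_gen_set G S" by fact
  have Sc: "S \<subseteq> carrier G" and Sfin: "finite S" and Sgen: "generate G S = carrier G"
    using SS by (auto simp: symmetric_gen_set_def)
  obtain g where g: "g \<in> carrier G" and TA: "top_anosov_homeo (\<Phi> g) U V"
    using assms(5) by blast
  have iter: "int_iter (\<Phi> g) = (\<lambda>k. \<Phi> (g [^]\<^bsub>G\<^esub> k))"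
    using int_iter_act[OF grp A g] by (simp add: fun_eq_iff)
  obtain \<gamma> where gam: "\<gamma> > 0" "(\<Union>x\<in>V. ball x \<gamma>) \<subseteq> U"
    using TA by (auto simp: top_anosov_homeo_def top_anosov_def)
  have shZ: "shadowing_on integer_group (\<lambda>k. \<Phi> (g [^]\<^bsub>G\<^esub> k)) {1, -1} V"
    using TA iter by (simp add: top_anosov_homeo_def top_anosov_def)
  obtain \<Delta> where Del: "\<Delta> > 0" "\<forall>x1\<in>U. \<forall>x2\<in>U.
        (\<forall>k::int. \<Phi> (g [^]\<^bsub>G\<^esub> k) x1 \<in> U \<and> \<Phi> (g [^]\<^bsub>G\<^esub> k) x2 \<in> U \<and>
             dist (\<Phi> (g [^]\<^bsub>G\<^esub> k) x1) (\<Phi> (g [^]\<^bsub>G\<^esub> k) x2) < \<Delta>) \<longrightarrow> x1 = x2"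
  proof -
    have "expansive_on integer_group (\<lambda>k. \<Phi> (g [^]\<^bsub>G\<^esub> k)) U"
      using TA iter by (simp add: top_anosov_homeo_def top_anosov_def)
    then have "\<exists>\<Delta>>0. \<forall>x1\<in>U. \<forall>x2\<in>U.
        (\<forall>k::int. \<Phi> (g [^]\<^bsub>G\<^esub> k) x1 \<in> U \<and> \<Phi> (g [^]\<^bsub>G\<^esub> k) x2 \<in> U \<and>
             dist (\<Phi> (g [^]\<^bsub>G\<^esub> k) x1) (\<Phi> (g [^]\<^bsub>G\<^esub> k) x2) < \<Delta>) \<longrightarrow> x1 = x2"
      by (simp add: expansive_on_def)
    then show ?thesis using that by blast
  qed
  have TA1: "\<exists>\<gamma>>0. (\<Union>x\<in>V. ball x \<gamma>) \<subseteq> U" using gam by blast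
  have EXP: "expansive_on G \<Phi> U"
    unfolding expansive_on_def
  proof (intro exI[of _ \<Delta>] conjI ballI impI)
    show "\<Delta> > 0" by (fact Del(1))
    fix x1 x2 assume x: "x1 \<in> U" "x2 \<in> U" and H: "\<forall>h\<in>carrier G. \<Phi> h x1 \<in> U \<and> \<Phi> h x2 \<in> U \<and>
             dist (\<Phi> h x1) (\<Phi> h x2) < \<Delta>"
    then show "x1 = x2" using Del(2) g by simp
  qed
  have SH: "shadowing_on G \<Phi> S V"
    unfolding shadowing_on_def
  proof (intro allI impI)
    fix \<epsilon> :: real assume eps: "\<epsilon> > 0"
    define cc where "cc = min \<gamma> \<Delta> / 3"
    have cc: "cc > 0" "(cc + cc) \<le> \<gamma>" "(cc + cc + cc) \<le> \<Delta>" using gam Del by (auto simp: cc_def)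
    define \<psi> where "\<psi> a = commutator G (inv\<^bsub>G\<^esub> a) g" for a
    define F where "F = (\<lambda>(s,j). (\<psi> ^^ j) s) ` (S \<times> {..n})"
    have psi_lc: "(\<psi> ^^ j) s \<in> lower_central G j" if "s \<in> carrier G" for s j
    proof (induction j)
      case 0 then show ?case using that by simp
    next
      case (Suc j) then show ?case using lc_comm[OF grp _ g] by (simp add: \<psi>_def)
    qed
    have psi_c: "(\<psi> ^^ j) s \<in> carrier G" if "s \<in> carrier G" for s j
      using psi_lc[OF that, of j] subgroup.subset[OF lc_subgroup[OF grp, of j]] by blast
    have Ffin: "finite F" using Sfin by (simp add: F_def)
    have Fc: "F \<subseteq> carrier G" using Sc psi_c by (auto simp: F_def)
    have "\<exists>\<rho>>0. \<forall>a\<in>F. \<forall>x x'. dist x' x < \<rho> \<longrightarrow> dist (\<Phi> a x') (\<Phi> a x) < cc"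
      apply (rule finite_delta[OF Ffin])
      using UCall Fc cc(1) unfolding UC_def apply blast
      by (meson less_le_trans)
    then obtain \<rho> where rho: "\<rho> > 0" "\<forall>a\<in>F. \<forall>x x'. dist x' x < \<rho> \<longrightarrow> dist (\<Phi> a x') (\<Phi> a x) < cc"
      by blast
    define \<epsilon>1 where "\<epsilon>1 = min (min \<epsilon> cc) \<rho>"
    have e1: "\<epsilon>1 > 0" "\<epsilon>1 \<le> \<epsilon>" "\<epsilon>1 \<le> cc" "\<epsilon>1 \<le> \<rho>" using eps cc rho by (auto simp: \<epsilon>1_def)
    obtain d' where d': "d' > 0" "\<forall>z. pseudotrajectory integer_group (\<lambda>k. \<Phi> (g [^]\<^bsub>G\<^esub> k)) {1, -1} d' z
        \<and> (\<forall>k\<in>carrier integer_group. z k \<in> V) \<longrightarrow>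
        (\<exists>x. \<forall>k\<in>carrier integer_group. dist (z k) (\<Phi> (g [^]\<^bsub>G\<^esub> k) x) < \<epsilon>1)"
      using shZ e1(1) unfolding shadowing_on_def by blast
    obtain \<delta>g where dg: "\<delta>g > 0" "\<forall>y. pseudotrajectory G \<Phi> S \<delta>g y \<longrightarrow>
           (\<forall>h\<in>carrier G. dist (y (g \<otimes>\<^bsub>G\<^esub> h)) (\<Phi> g (y h)) < d')"
      using word_est[OF grp A SS UCall g] d'(1) by blast
    obtain \<delta>i where di: "\<delta>i > 0" "\<forall>y. pseudotrajectory G \<Phi> S \<delta>i y \<longrightarrow>
           (\<forall>h\<in>carrier G. dist (y (inv\<^bsub>G\<^esub> g \<otimes>\<^bsub>G\<^esub> h)) (\<Phi> (inv\<^bsub>G\<^esub> g) (y h)) < d')"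
      using word_est[OF grp A SS UCall inv_closed[OF g]] d'(1) by blast
    have "\<exists>\<delta>>0. \<forall>a\<in>F. \<forall>y. pseudotrajectory G \<Phi> S \<delta> y \<longrightarrow>
           (\<forall>h\<in>carrier G. dist (y (a \<otimes>\<^bsub>G\<^esub> h)) (\<Phi> a (y h)) < cc)"
      apply (rule finite_delta[OF Ffin])
      using word_est[OF grp A SS UCall] Fc cc(1) apply blast
      using pseudo_mono by blast
    then obtain \<delta>F where dF: "\<delta>F > 0" "\<forall>a\<in>F. \<forall>y. pseudotrajectory G \<Phi> S \<delta>F y \<longrightarrow>
           (\<forall>h\<in>carrier G. dist (y (a \<otimes>\<^bsub>G\<^esub> h)) (\<Phi> a (y h)) < cc)"
      by blast
    show "\<exists>d>0. \<forall>y. pseudotrajectory G \<Phi> S d y \<and> (\<forall>h\<in>carrier G. y h \<in> V) \<longrightarrow>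
        (\<exists>x. \<forall>h\<in>carrier G. dist (y h) (\<Phi> h x) < \<epsilon>)"
    proof (intro exI[of _ "min (min \<delta>g \<delta>i) \<delta>F"] conjI allI impI)
      show "min (min \<delta>g \<delta>i) \<delta>F > 0" using dg di dF by simp
      fix y assume yH: "pseudotrajectory G \<Phi> S (min (min \<delta>g \<delta>i) \<delta>F) y \<and> (\<forall>h\<in>carrier G. y h \<in> V)"
      then have yV: "\<And>h. h \<in> carrier G \<Longrightarrow> y h \<in> V" by blast
      have pg: "pseudotrajectory G \<Phi> S \<delta>g y" and pi: "pseudotrajectory G \<Phi> S \<delta>i y"
        and pF: "pseudotrajectory G \<Phi> S \<delta>F y"
        using yH pseudo_mono by fastforce+
      have yg: "\<And>h. h \<in> carrier G \<Longrightarrow> dist (y (g \<otimes>\<^bsub>G\<^esub> h)) (\<Phi> g (y h)) < d'"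
        using dg pg by blast
      have yi: "\<And>h. h \<in> carrier G \<Longrightarrow> dist (y (inv\<^bsub>G\<^esub> g \<otimes>\<^bsub>G\<^esub> h)) (\<Phi> (inv\<^bsub>G\<^esub> g) (y h)) < d'"
        using di pi by blast
      have yF: "\<And>a h. a \<in> F \<Longrightarrow> h \<in> carrier G \<Longrightarrow> dist (y (a \<otimes>\<^bsub>G\<^esub> h)) (\<Phi> a (y h)) < cc"
        using dF pF by blast
      define Pr where "Pr h x \<longleftrightarrow> (\<forall>k::int. dist (y (g [^]\<^bsub>G\<^esub> k \<otimes>\<^bsub>G\<^esub> h)) (\<Phi> (g [^]\<^bsub>G\<^esub> k) x) < \<epsilon>1)" for h x
      have Pex: "\<exists>x. Pr h x" if h: "h \<in> carrier G" for h
      proof -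
        define z where "z k = y (g [^]\<^bsub>G\<^esub> k \<otimes>\<^bsub>G\<^esub> h)" for k :: int
        have "pseudotrajectory integer_group (\<lambda>k. \<Phi> (g [^]\<^bsub>G\<^esub> k)) {1, -1} d' z"
          unfolding pseudotrajectory_def
        proof (intro ballI)
          fix s k :: int assume s: "s \<in> {1, -1}"
          have gk: "g [^]\<^bsub>G\<^esub> k \<otimes>\<^bsub>G\<^esub> h \<in> carrier G" using g h by simp
          show "dist (z (s \<otimes>\<^bsub>integer_group\<^esub> k)) (\<Phi> (g [^]\<^bsub>G\<^esub> s) (z k)) < d'"
          proof (cases "s = 1")
            case True
            have "g [^]\<^bsub>G\<^esub> (1 + k) \<otimes>\<^bsub>G\<^esub> h = g \<otimes>\<^bsub>G\<^esub> (g [^]\<^bsub>G\<^esub> k \<otimes>\<^bsub>G\<^esub> h)"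
              using g h by (simp add: int_pow_mult m_assoc)
            then show ?thesis using True yg[OF gk] g by (simp add: z_def)
          next
            case False
            then have s1: "s = -1" using s by simp
            have m1: "g [^]\<^bsub>G\<^esub> (-1::int) = inv\<^bsub>G\<^esub> g" using g int_pow_neg[OF g, of 1] by simp
            have "g [^]\<^bsub>G\<^esub> (-1 + k) = g [^]\<^bsub>G\<^esub> (-1::int) \<otimes>\<^bsub>G\<^esub> g [^]\<^bsub>G\<^esub> k"
              by (rule int_pow_mult[OF g])
            then have "g [^]\<^bsub>G\<^esub> (-1 + k) \<otimes>\<^bsub>G\<^esub> h = inv\<^bsub>G\<^esub> g \<otimes>\<^bsub>G\<^esub> (g [^]\<^bsub>G\<^esub> k \<otimes>\<^bsub>G\<^esub> h)"
              using g h m1 by (simp add: m_assoc)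
            moreover note m1
            ultimately show ?thesis using s1 yi[OF gk] g by (simp add: z_def)
          qed
        qed
        moreover have "\<forall>k\<in>carrier integer_group. z k \<in> V" using yV g h by (simp add: z_def)
        ultimately obtain x where "\<forall>k\<in>carrier integer_group. dist (z k) (\<Phi> (g [^]\<^bsub>G\<^esub> k) x) < \<epsilon>1"
          using d'(2) by blast
        then show ?thesis by (auto simp: Pr_def z_def)
      qed
      define Xf where "Xf h = (SOME x. Pr h x)" for h
      have XP: "Pr h (Xf h)" if "h \<in> carrier G" for h
        unfolding Xf_def using Pex[OF that] by (rule someI_ex)
      have X0: "dist (y h) (Xf h) < \<epsilon>1" if "h \<in> carrier G" for h
        using XP[OF that] that A unfolding Pr_def by (metis int_pow_0 l_one act_one)
      have uniq: "p = q" if h: "h \<in> carrier G" and r: "r1 \<le> \<gamma>" "r2 \<le> \<gamma>" "r1 + r2 \<le> \<Delta>"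
        and hp: "\<forall>k::int. dist (y (g [^]\<^bsub>G\<^esub> k \<otimes>\<^bsub>G\<^esub> h)) (\<Phi> (g [^]\<^bsub>G\<^esub> k) p) < r1"
        and hq: "\<forall>k::int. dist (y (g [^]\<^bsub>G\<^esub> k \<otimes>\<^bsub>G\<^esub> h)) (\<Phi> (g [^]\<^bsub>G\<^esub> k) q) < r2" for h p q r1 r2
      proof -
        have inU: "\<Phi> (g [^]\<^bsub>G\<^esub> k) p \<in> U \<and> \<Phi> (g [^]\<^bsub>G\<^esub> k) q \<in> U \<and>
             dist (\<Phi> (g [^]\<^bsub>G\<^esub> k) p) (\<Phi> (g [^]\<^bsub>G\<^esub> k) q) < \<Delta>" for k :: int
        proof -
          have w: "y (g [^]\<^bsub>G\<^esub> k \<otimes>\<^bsub>G\<^esub> h) \<in> V" using yV g h by simp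
          have "\<Phi> (g [^]\<^bsub>G\<^esub> k) p \<in> ball (y (g [^]\<^bsub>G\<^esub> k \<otimes>\<^bsub>G\<^esub> h)) \<gamma>" using hp r by (auto intro: less_le_trans)
          moreover have "\<Phi> (g [^]\<^bsub>G\<^esub> k) q \<in> ball (y (g [^]\<^bsub>G\<^esub> k \<otimes>\<^bsub>G\<^esub> h)) \<gamma>" using hq r by (auto intro: less_le_trans)
          moreover have "dist (\<Phi> (g [^]\<^bsub>G\<^esub> k) p) (\<Phi> (g [^]\<^bsub>G\<^esub> k) q) < \<Delta>"
            using dist_triangle[of "\<Phi> (g [^]\<^bsub>G\<^esub> k) p" "\<Phi> (g [^]\<^bsub>G\<^esub> k) q" "y (g [^]\<^bsub>G\<^esub> k \<otimes>\<^bsub>G\<^esub> h)"]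
              hp[rule_format, of k] hq[rule_format, of k] r dist_commute[of "\<Phi> (g [^]\<^bsub>G\<^esub> k) p" "y (g [^]\<^bsub>G\<^esub> k \<otimes>\<^bsub>G\<^esub> h)"]
            by linarith
          ultimately show ?thesis using w gam(2) by blast
        qed
        have "p \<in> U" "q \<in> U" using inU[of "0::int"] A by (auto simp: act_one)
        then show ?thesis using Del(2) inU by blast
      qed
      define Q where "Q = {a \<in> carrier G. \<forall>h\<in>carrier G. \<Phi> a (Xf h) = Xf (a \<otimes>\<^bsub>G\<^esub> h)}"
      have Qsub: "subgroup Q G"
      proof (rule subgroupI)
        show "Q \<subseteq> carrier G" by (auto simp: Q_def)
        show "Q \<noteq> {}" using A by (auto simp: Q_def act_one intro!: exI[of _ "\<one>\<^bsub>G\<^esub>"])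
        show "inv\<^bsub>G\<^esub> a \<in> Q" if a: "a \<in> Q" for a
        proof -
          have ac: "a \<in> carrier G" using a by (simp add: Q_def)
          have "\<Phi> (inv\<^bsub>G\<^esub> a) (Xf h) = Xf (inv\<^bsub>G\<^esub> a \<otimes>\<^bsub>G\<^esub> h)" if h: "h \<in> carrier G" for h
          proof -
            have "Xf h = \<Phi> a (Xf (inv\<^bsub>G\<^esub> a \<otimes>\<^bsub>G\<^esub> h))" using a ac h by (simp add: Q_def cancel1)
            then show ?thesis using act_inv1[OF grp A ac] by simp
          qed
          then show ?thesis using ac by (simp add: Q_def)
        qed
        show "a \<otimes>\<^bsub>G\<^esub> b \<in> Q" if "a \<in> Q" "b \<in> Q" for a b
          using that A by (simp add: Q_def act_mult m_assoc)
      qed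
      have gQ: "g \<in> Q"
      proof -
        have "\<Phi> g (Xf h) = Xf (g \<otimes>\<^bsub>G\<^esub> h)" if h: "h \<in> carrier G" for h
        proof (rule uniq[of "g \<otimes>\<^bsub>G\<^esub> h" \<epsilon>1 \<epsilon>1])
          show "g \<otimes>\<^bsub>G\<^esub> h \<in> carrier G" using g h by simp
          show "\<epsilon>1 \<le> \<gamma>" "\<epsilon>1 \<le> \<gamma>" "\<epsilon>1 + \<epsilon>1 \<le> \<Delta>" using e1 cc by auto
          show "\<forall>k::int. dist (y (g [^]\<^bsub>G\<^esub> k \<otimes>\<^bsub>G\<^esub> (g \<otimes>\<^bsub>G\<^esub> h))) (\<Phi> (g [^]\<^bsub>G\<^esub> k) (Xf (g \<otimes>\<^bsub>G\<^esub> h))) < \<epsilon>1"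
            using XP[of "g \<otimes>\<^bsub>G\<^esub> h"] g h by (simp add: Pr_def)
          show "\<forall>k::int. dist (y (g [^]\<^bsub>G\<^esub> k \<otimes>\<^bsub>G\<^esub> (g \<otimes>\<^bsub>G\<^esub> h))) (\<Phi> (g [^]\<^bsub>G\<^esub> k) (\<Phi> g (Xf h))) < \<epsilon>1"
          proof
            fix k :: int
            have "g [^]\<^bsub>G\<^esub> (k + 1) = g [^]\<^bsub>G\<^esub> k \<otimes>\<^bsub>G\<^esub> g" using g by (simp add: int_pow_mult)
            then have "g [^]\<^bsub>G\<^esub> k \<otimes>\<^bsub>G\<^esub> (g \<otimes>\<^bsub>G\<^esub> h) = g [^]\<^bsub>G\<^esub> (k+1) \<otimes>\<^bsub>G\<^esub> h"
              and "\<Phi> (g [^]\<^bsub>G\<^esub> k) (\<Phi> g (Xf h)) = \<Phi> (g [^]\<^bsub>G\<^esub> (k+1)) (Xf h)"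
              using g h A by (simp_all add: m_assoc act_mult)
            then show "dist (y (g [^]\<^bsub>G\<^esub> k \<otimes>\<^bsub>G\<^esub> (g \<otimes>\<^bsub>G\<^esub> h))) (\<Phi> (g [^]\<^bsub>G\<^esub> k) (\<Phi> g (Xf h))) < \<epsilon>1"
              using XP[OF h] by (simp add: Pr_def)
          qed
        qed
        then show ?thesis using g by (simp add: Q_def)
      qed
      have step: "a \<in> Q" if aF: "a \<in> F" and tQ: "inv\<^bsub>G\<^esub> a \<otimes>\<^bsub>G\<^esub> g \<otimes>\<^bsub>G\<^esub> a \<in> Q" for a
      proof -
        have ac: "a \<in> carrier G" using aF Fc by blast
        define t where "t = inv\<^bsub>G\<^esub> a \<otimes>\<^bsub>G\<^esub> g \<otimes>\<^bsub>G\<^esub> a"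
        have tc: "t \<in> carrier G" using ac g by (simp add: t_def)
        have tk: "t [^]\<^bsub>G\<^esub> k \<in> Q" for k :: int
          using subgroup_int_pow_closed[OF Qsub] tQ by (simp add: t_def)
        have "\<Phi> a (Xf h) = Xf (a \<otimes>\<^bsub>G\<^esub> h)" if h: "h \<in> carrier G" for h
        proof (rule uniq[of "a \<otimes>\<^bsub>G\<^esub> h" "(cc + cc)" \<epsilon>1])
          show "a \<otimes>\<^bsub>G\<^esub> h \<in> carrier G" using ac h by simp
          show "(cc + cc) \<le> \<gamma>" "\<epsilon>1 \<le> \<gamma>" "(cc + cc) + \<epsilon>1 \<le> \<Delta>" using e1 cc by auto
          show "\<forall>k::int. dist (y (g [^]\<^bsub>G\<^esub> k \<otimes>\<^bsub>G\<^esub> (a \<otimes>\<^bsub>G\<^esub> h))) (\<Phi> (g [^]\<^bsub>G\<^esub> k) (Xf (a \<otimes>\<^bsub>G\<^esub> h))) < \<epsilon>1"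
            using XP[of "a \<otimes>\<^bsub>G\<^esub> h"] ac h by (simp add: Pr_def)
          show "\<forall>k::int. dist (y (g [^]\<^bsub>G\<^esub> k \<otimes>\<^bsub>G\<^esub> (a \<otimes>\<^bsub>G\<^esub> h))) (\<Phi> (g [^]\<^bsub>G\<^esub> k) (\<Phi> a (Xf h))) < (cc + cc)"
          proof
            fix k :: int
            define w where "w = t [^]\<^bsub>G\<^esub> k \<otimes>\<^bsub>G\<^esub> h"
            have wc: "w \<in> carrier G" using tc h by (simp add: w_def)
            have tkeq: "t [^]\<^bsub>G\<^esub> k = inv\<^bsub>G\<^esub> a \<otimes>\<^bsub>G\<^esub> g [^]\<^bsub>G\<^esub> k \<otimes>\<^bsub>G\<^esub> a" using conj_pow[OF ac g] by (simp add: t_def)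
            have ga: "g [^]\<^bsub>G\<^esub> k \<otimes>\<^bsub>G\<^esub> a = a \<otimes>\<^bsub>G\<^esub> t [^]\<^bsub>G\<^esub> k" using conj_move[of a "g [^]\<^bsub>G\<^esub> k"] ac g tkeq by simp
            have e_y: "g [^]\<^bsub>G\<^esub> k \<otimes>\<^bsub>G\<^esub> (a \<otimes>\<^bsub>G\<^esub> h) = a \<otimes>\<^bsub>G\<^esub> w"
              using ga ac g h tc by (simp add: w_def m_assoc[symmetric])
            have e_phi: "\<Phi> (g [^]\<^bsub>G\<^esub> k) (\<Phi> a (Xf h)) = \<Phi> a (Xf w)"
            proof -
              have "\<Phi> (g [^]\<^bsub>G\<^esub> k) (\<Phi> a (Xf h)) = \<Phi> (g [^]\<^bsub>G\<^esub> k \<otimes>\<^bsub>G\<^esub> a) (Xf h)" using A g ac by (simp add: act_mult)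
              also have "\<dots> = \<Phi> a (\<Phi> (t [^]\<^bsub>G\<^esub> k) (Xf h))" using ga A ac tc by (simp add: act_mult)
              also have "\<Phi> (t [^]\<^bsub>G\<^esub> k) (Xf h) = Xf w" using tk[of k] h by (simp add: Q_def w_def)
              finally show ?thesis .
            qed
            have d1: "dist (y (a \<otimes>\<^bsub>G\<^esub> w)) (\<Phi> a (y w)) < cc" using yF[OF aF wc] .
            have "dist (y w) (Xf w) < \<rho>" using X0[OF wc] e1 by linarith
            then have d2: "dist (\<Phi> a (y w)) (\<Phi> a (Xf w)) < cc" using rho(2) aF by blast
            show "dist (y (g [^]\<^bsub>G\<^esub> k \<otimes>\<^bsub>G\<^esub> (a \<otimes>\<^bsub>G\<^esub> h))) (\<Phi> (g [^]\<^bsub>G\<^esub> k) (\<Phi> a (Xf h))) < (cc + cc)"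
              unfolding e_y e_phi
              using dist_triangle[of "y (a \<otimes>\<^bsub>G\<^esub> w)" "\<Phi> a (Xf w)" "\<Phi> a (y w)"] d1 d2 by linarith
          qed
        qed
        then show ?thesis using ac by (simp add: Q_def)
      qed
      have chain: "\<forall>s\<in>S. (\<psi> ^^ (n - m)) s \<in> Q" if "m \<le> n" for m
        using that
      proof (induction m)
        case 0
        have "(\<psi> ^^ n) s \<in> Q" if "s \<in> S" for s
          using psi_lc[of s n] that Sc n subgroup.one_closed[OF Qsub] by auto
        then show ?case by simp
      next
        case (Suc m)
        show ?case
        proof
          fix s assume s: "s \<in> S"
          define j where "j = n - Suc m"
          have nm: "n - m = Suc j" using Suc.prems by (simp add: j_def)
          define a where "a = (\<psi> ^^ j) s"
          have ac: "a \<in> carrier G" using psi_c s Sc by (auto simp: a_def)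
          have aF: "a \<in> F" unfolding F_def a_def using s by (auto intro!: image_eqI[of _ _ "(s, j)"] simp: j_def)
          have "\<psi> a \<in> Q" using Suc.IH Suc.prems s nm by (simp add: a_def)
          then have "\<psi> a \<otimes>\<^bsub>G\<^esub> g \<in> Q" using gQ subgroup.m_closed[OF Qsub] by blast
          then have "inv\<^bsub>G\<^esub> a \<otimes>\<^bsub>G\<^esub> g \<otimes>\<^bsub>G\<^esub> a \<in> Q" using comm_t[OF ac g] by (simp add: \<psi>_def)
          then have "a \<in> Q" using step aF by blast
          then show "(\<psi> ^^ (n - Suc m)) s \<in> Q" by (simp add: a_def j_def)
        qed
      qed
      have "S \<subseteq> Q" using chain[of n] by auto
      then have "carrier G \<subseteq> Q" using generate_subgroup_incl[OF _ Qsub] Sgen by blast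
      then have allQ: "\<And>h. h \<in> carrier G \<Longrightarrow> \<Phi> h (Xf \<one>\<^bsub>G\<^esub>) = Xf h" by (auto simp: Q_def)
      show "\<exists>x. \<forall>h\<in>carrier G. dist (y h) (\<Phi> h x) < \<epsilon>"
      proof (intro exI[of _ "Xf \<one>\<^bsub>G\<^esub>"] ballI)
        fix h assume h: "h \<in> carrier G"
        show "dist (y h) (\<Phi> h (Xf \<one>\<^bsub>G\<^esub>)) < \<epsilon>" using allQ[OF h] X0[OF h] e1 by simp
      qed
    qed
  qed
  show ?thesis unfolding top_anosov_def using TA1 SH EXP by blast
qed

end
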